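(* Let $(\mathfrak{g},[\cdot,\cdot]_{\mathfrak{g}})$ be a Leibniz algebra over a field $\mathbf{K}$, $(V;\rho^L,\rho^R)$ a representation, and $T:V\to\mathfrak{g}$ a relative Rota-Baxter operator. If $\mathcal{Z}^1(V,\mathfrak{g})=\partial_T(\mathrm{Nij}(T))$, then $T$ is rigid.
   Context: A Leibniz algebra is a vector space $\mathfrak{g}$ with bilinear $[\cdot,\cdot]_{\mathfrak{g}}$ satisfying $[x,[y,z]_{\mathfrak{g}}]_{\mathfrak{g}}=[[x,y]_{\mathfrak{g}},z]_{\mathfrak{g}}+[y,[x,z]_{\mathfrak{g}}]_{\mathfrak{g}}$. A representation $(V;\rho^L,\rho^R)$: linear $\rho^L,\rho^R:\mathfrak{g}\to\mathfrak{gl}(V)$ with $\rho^L([x,y]_{\mathfrak{g}})=[\rho^L(x),\rho^L(y)]$, $\rho^R([x,y]_{\mathfrak{g}})=[\rho^L(x),\rho^R(y)]$, $\rho^R(y)\rho^L(x)=-\rho^R(y)\rho^R(x)$. $L_xy=[x,y]_{\mathfrak{g}}$. A relative Rota-Baxter operator is a linear $T:V\to\mathfrak{g}$ with $[Tv_1,Tv_2]_{\mathfrak{g}}=T(\rho^L(Tv_1)v_2+\rho^R(Tv_2)v_1)$. $C^1(V,\mathfrak{g})=\mathrm{Hom}(V,\mathfrak{g})$; $\partial_T:\mathfrak{g}\to C^1$ is $(\partial_Tx)(v)=T\rho^L(x)v-[x,Tv]_{\mathfrak{g}}$, and $\partial_T:C^1\to\mathrm{Hom}(V\otimes V,\mathfrak{g})$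 is $(\partial_Tf)(u,v)=[Tu,f(v)]_{\mathfrak{g}}+[f(u),Tv]_{\mathfrak{g}}-T(\rho^L(f(u))v+\rho^R(f(v))u)-f(\rho^L(Tu)v+\rho^R(Tv)u)$; $\mathcal{Z}^1(V,\mathfrak{g})$ is the kernel of the latter. An element $x\in\mathfrak{g}$ is a Nijenhuis element associated to $T$ if for all $y,z\in\mathfrak{g}$, $u\in V$: $[[x,y]_{\mathfrak{g}},[x,z]_{\mathfrak{g}}]_{\mathfrak{g}}=0$, $\rho^L([x,y]_{\mathfrak{g}})\rho^L(x)=0$, $\rho^R([x,y]_{\mathfrak{g}})\rho^L(x)=0$, $[x,T\rho^L(x)u-[x,Tu]_{\mathfrak{g}}]_{\mathfrak{g}}=0$; $\mathrm{Nij}(T)$ is the set of these. Formal deformations: the bracket and $\rho^L,\rho^R$ extend $\mathbf{K}[[t]]$-bilinearly to $\mathfrak{g}[[t]]$, $V[[t]]$. A formal deformation of $T$ is $T_t=\sum_{i\ge0}\mathfrak{T}_it^i$, $\mathfrak{T}_i\in\mathrm{Hom}(V,\mathfrak{g})$, $\mathfrak{T}_0=T$, extended $\mathbf{K}[[t]]$-linearly, with $[T_t(u),T_t(v)]_{\mathfrak{g}}=T_t(\rho^L(T_t(u))v+\rho^R(T_t(v))u)$ for $u,v\in V$. Two formal deformations $\bar T_t,T_t$ of $T$ are equivalent if there exist $x\in\mathfrak{g}$, $\phi_i\in\mathfrak{gl}(\mathfrak{g})$, $\varphi_i\in\mathfrak{gl}(V)$ ($i\ge2$) such that $\phi_t=\mathrm{Id}_{\mathfrak{g}}+tL_x+\sum_{i\ge2}\phi_it^i$,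 $\varphi_t=\mathrm{Id}_V+t\rho^L(x)+\sum_{i\ge2}\varphi_it^i$ satisfy $[\phi_t(y),\phi_t(z)]_{\mathfrak{g}}=\phi_t[y,z]_{\mathfrak{g}}$, $\varphi_t\rho^L(y)u=\rho^L(\phi_t(y))\varphi_t(u)$, $\varphi_t\rho^R(y)u=\rho^R(\phi_t(y))\varphi_t(u)$, and $T_t\circ\varphi_t=\phi_t\circ\bar T_t$. A formal deformation $T_t$ is trivial if it is equivalent to $T$ (the constant deformation, taken as $\bar T_t=T$). $T$ is rigid if every formal deformation of $T$ is trivial. *)

theory Defs
  imports Main "HOL.Vector_Spaces"
begin

definition leibniz_algebra ::
  "('k::field \<Rightarrow> 'g::ab_group_add \<Rightarrow> 'g) \<Rightarrow> ('g \<Rightarrow> 'g \<Rightarrow> 'g) \<Rightarrow> bool" where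
  "leibniz_algebra sg br \<longleftrightarrow> vector_space sg
     \<and> (\<forall>x. Vector_Spaces.linear sg sg (br x))
     \<and> (\<forall>y. Vector_Spaces.linear sg sg (\<lambda>x. br x y))
     \<and> (\<forall>x y z. br x (br y z) = br (br x y) z + br y (br x z))"

definition leibniz_rep ::
  "('k::field \<Rightarrow> 'g::ab_group_add \<Rightarrow> 'g) \<Rightarrow> ('g \<Rightarrow> 'g \<Rightarrow> 'g) \<Rightarrow>
   ('k \<Rightarrow> 'v::ab_group_add \<Rightarrow> 'v) \<Rightarrow> ('g \<Rightarrow> 'v \<Rightarrow> 'v) \<Rightarrow> ('g \<Rightarrow> 'v \<Rightarrow> 'v) \<Rightarrow> bool" where
  "leibniz_rep sg br sv rL rR \<longleftrightarrow> vector_space sv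
     \<and> (\<forall>x. Vector_Spaces.linear sv sv (rL x)) \<and> (\<forall>x. Vector_Spaces.linear sv sv (rR x))
     \<and> (\<forall>v. Vector_Spaces.linear sg sv (\<lambda>x. rL x v))
     \<and> (\<forall>v. Vector_Spaces.linear sg sv (\<lambda>x. rR x v))
     \<and> (\<forall>x y v. rL (br x y) v = rL x (rL y v) - rL y (rL x v))
     \<and> (\<forall>x y v. rR (br x y) v = rL x (rR y v) - rR y (rL x v))
     \<and> (\<forall>x y v. rR y (rL x v) = - rR y (rR x v))"

definition rel_RB ::
  "('k::field \<Rightarrow> 'g::ab_group_add \<Rightarrow> 'g) \<Rightarrow> ('g \<Rightarrow> 'g \<Rightarrow> 'g) \<Rightarrow>
   ('k \<Rightarrow> 'v::ab_group_add \<Rightarrow> 'v) \<Rightarrow> ('g \<Rightarrow> 'v \<Rightarrow> 'v) \<Rightarrow> ('g \<Rightarrow> 'v \<Rightarrow> 'v) \<Rightarrow>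
   ('v \<Rightarrow> 'g) \<Rightarrow> bool" where
  "rel_RB sg br sv rL rR T \<longleftrightarrow> Vector_Spaces.linear sv sg T
     \<and> (\<forall>v1 v2. br (T v1) (T v2) = T (rL (T v1) v2 + rR (T v2) v1))"

definition dT0 :: "('g \<Rightarrow> 'g \<Rightarrow> 'g::ab_group_add) \<Rightarrow> ('g \<Rightarrow> 'v \<Rightarrow> 'v) \<Rightarrow> ('v \<Rightarrow> 'g) \<Rightarrow> 'g \<Rightarrow> ('v \<Rightarrow> 'g)" where
  "dT0 br rL T x = (\<lambda>v. T (rL x v) - br x (T v))"

definition dT1 ::
  "('g \<Rightarrow> 'g \<Rightarrow> 'g::ab_group_add) \<Rightarrow> ('g \<Rightarrow> 'v::ab_group_add \<Rightarrow> 'v) \<Rightarrow> ('g \<Rightarrow> 'v \<Rightarrow> 'v) \<Rightarrow>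
   ('v \<Rightarrow> 'g) \<Rightarrow> ('v \<Rightarrow> 'g) \<Rightarrow> 'v \<Rightarrow> 'v \<Rightarrow> 'g" where
  "dT1 br rL rR T f u v = br (T u) (f v) + br (f u) (T v)
     - T (rL (f u) v + rR (f v) u) - f (rL (T u) v + rR (T v) u)"

definition Z1 ::
  "('k::field \<Rightarrow> 'g::ab_group_add \<Rightarrow> 'g) \<Rightarrow> ('g \<Rightarrow> 'g \<Rightarrow> 'g) \<Rightarrow>
   ('k \<Rightarrow> 'v::ab_group_add \<Rightarrow> 'v) \<Rightarrow> ('g \<Rightarrow> 'v \<Rightarrow> 'v) \<Rightarrow> ('g \<Rightarrow> 'v \<Rightarrow> 'v) \<Rightarrow>
   ('v \<Rightarrow> 'g) \<Rightarrow> ('v \<Rightarrow> 'g) set" where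
  "Z1 sg br sv rL rR T = {f. Vector_Spaces.linear sv sg f \<and> (\<forall>u v. dT1 br rL rR T f u v = 0)}"

definition Nij ::
  "('g \<Rightarrow> 'g \<Rightarrow> 'g::ab_group_add) \<Rightarrow> ('g \<Rightarrow> 'v::ab_group_add \<Rightarrow> 'v) \<Rightarrow> ('g \<Rightarrow> 'v \<Rightarrow> 'v) \<Rightarrow>
   ('v \<Rightarrow> 'g) \<Rightarrow> 'g set" where
  "Nij br rL rR T = {x. \<forall>y z u.
       br (br x y) (br x z) = 0
     \<and> rL (br x y) (rL x u) = 0
     \<and> rR (br x y) (rL x u) = 0
     \<and> br x (T (rL x u) - br x (T u)) = 0}"

text \<open>A formal deformation T_t = sum_i Ts i t^i, with the deformation equation compared
  coefficientwise (coefficient of t^n).\<close>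
definition formal_deformation ::
  "('k::field \<Rightarrow> 'g::ab_group_add \<Rightarrow> 'g) \<Rightarrow> ('g \<Rightarrow> 'g \<Rightarrow> 'g) \<Rightarrow>
   ('k \<Rightarrow> 'v::ab_group_add \<Rightarrow> 'v) \<Rightarrow> ('g \<Rightarrow> 'v \<Rightarrow> 'v) \<Rightarrow> ('g \<Rightarrow> 'v \<Rightarrow> 'v) \<Rightarrow>
   ('v \<Rightarrow> 'g) \<Rightarrow> (nat \<Rightarrow> 'v \<Rightarrow> 'g) \<Rightarrow> bool" where
  "formal_deformation sg br sv rL rR T Ts \<longleftrightarrow>
     (\<forall>i. Vector_Spaces.linear sv sg (Ts i)) \<and> Ts 0 = T
     \<and> (\<forall>n u v. (\<Sum>i\<le>n. br (Ts i u) (Ts (n - i) v))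
                = (\<Sum>i\<le>n. Ts i (rL (Ts (n - i) u) v + rR (Ts (n - i) v) u)))"

text \<open>T_t is trivial: equivalent to the constant deformation T, via
  phi_t = sum_i ph i t^i (on g) and varphi_t = sum_i vph i t^i (on V).\<close>
definition trivial_deformation ::
  "('k::field \<Rightarrow> 'g::ab_group_add \<Rightarrow> 'g) \<Rightarrow> ('g \<Rightarrow> 'g \<Rightarrow> 'g) \<Rightarrow>
   ('k \<Rightarrow> 'v::ab_group_add \<Rightarrow> 'v) \<Rightarrow> ('g \<Rightarrow> 'v \<Rightarrow> 'v) \<Rightarrow> ('g \<Rightarrow> 'v \<Rightarrow> 'v) \<Rightarrow>
   ('v \<Rightarrow> 'g) \<Rightarrow> (nat \<Rightarrow> 'v \<Rightarrow> 'g) \<Rightarrow> bool" where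
  "trivial_deformation sg br sv rL rR T Ts \<longleftrightarrow>
    (\<exists>x ph vph.
       (\<forall>i. Vector_Spaces.linear sg sg (ph i)) \<and> (\<forall>i. Vector_Spaces.linear sv sv (vph i))
     \<and> ph 0 = id \<and> ph 1 = br x \<and> vph 0 = id \<and> vph 1 = rL x
     \<and> (\<forall>n y z. (\<Sum>i\<le>n. br (ph i y) (ph (n - i) z)) = ph n (br y z))
     \<and> (\<forall>n y u. vph n (rL y u) = (\<Sum>i\<le>n. rL (ph i y) (vph (n - i) u)))
     \<and> (\<forall>n y u. vph n (rR y u) = (\<Sum>i\<le>n. rR (ph i y) (vph (n - i) u)))
     \<and> (\<forall>n u. (\<Sum>i\<le>n. Ts i (vph (n - i) u)) = ph n (T u)))"

definition rigid ::
  "('k::field \<Rightarrow> 'g::ab_group_add \<Rightarrow> 'g) \<Rightarrow> ('g \<Rightarrow> 'g \<Rightarrow> 'g) \<Rightarrow>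
   ('k \<Rightarrow> 'v::ab_group_add \<Rightarrow> 'v) \<Rightarrow> ('g \<Rightarrow> 'v \<Rightarrow> 'v) \<Rightarrow> ('g \<Rightarrow> 'v \<Rightarrow> 'v) \<Rightarrow>
   ('v \<Rightarrow> 'g) \<Rightarrow> bool" where
  "rigid sg br sv rL rR T \<longleftrightarrow>
     (\<forall>Ts. formal_deformation sg br sv rL rR T Ts \<longrightarrow> trivial_deformation sg br sv rL rR T Ts)"

end

theory Submission
  imports Defs
begin


definition cv :: "('a \<Rightarrow> 'b \<Rightarrow> 'c::comm_monoid_add) \<Rightarrow> (nat \<Rightarrow> 'a) \<Rightarrow> (nat \<Rightarrow> 'b) \<Rightarrow> nat \<Rightarrow> 'c" where
  "cv f a b n = (\<Sum>i\<le>n. f (a i) (b (n - i)))"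

definition sh :: "nat \<Rightarrow> (nat \<Rightarrow> 'a::zero) \<Rightarrow> nat \<Rightarrow> 'a" where
  "sh k a n = (if k \<le> n then a (n - k) else 0)"

lemma sh_add: "sh k (\<lambda>m. f m + g m) n = sh k f n + sh k g n" for f g :: "nat \<Rightarrow> 'a::monoid_add"
  by (simp add: sh_def)

lemma sh_zero: "sh k (\<lambda>m. 0) n = (0::'a::zero)"
  by (simp add: sh_def)

lemma cv_shr:
  assumes "\<And>i. f (a i) 0 = 0"
  shows "cv f a (sh k b) n = sh k (cv f a b) n"
proof (cases "k \<le> n")
  case False
  then show ?thesis using assms by (auto simp: cv_def sh_def intro!: sum.neutral)
next
  case True
  have "cv f a (sh k b) n = (\<Sum>i\<le>n - k. f (a i) (sh k b (n - i)))"
    unfolding cv_def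
    by (rule sum.mono_neutral_cong_right) (auto simp: sh_def assms)
  also have "\<dots> = (\<Sum>i\<le>n - k. f (a i) (b (n - k - i)))"
    using True by (intro sum.cong) (auto simp: sh_def intro!: arg_cong[where f="\<lambda>j. f (a _) (b j)"])
  finally show ?thesis using True by (simp add: sh_def cv_def)
qed

lemma cv_shl_gen:
  assumes "\<And>j. f z (b j) = 0"
  shows "cv f (\<lambda>i. if k \<le> i then a (i - k) else z) b n = sh k (cv f a b) n"
proof (cases "k \<le> n")
  case False
  then show ?thesis using assms by (auto simp: cv_def sh_def intro!: sum.neutral)
next
  case True
  have "cv f (\<lambda>i. if k \<le> i then a (i - k) else z) b n = (\<Sum>i\<in>{k..n}. f (a (i - k)) (b (n - i)))"
    unfolding cv_def
    by (rule sum.mono_neutral_cong_right) (auto simp: assms)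
  also have "\<dots> = (\<Sum>i\<in>{0 + k..(n - k) + k}. f (a (i - k)) (b (n - i)))"
    using True by simp
  also have "\<dots> = (\<Sum>i\<in>{0..n - k}. f (a i) (b (n - k - i)))"
    by (subst sum.shift_bounds_cl_nat_ivl) (simp add: algebra_simps)
  finally show ?thesis using True by (simp add: sh_def cv_def atLeast0AtMost)
qed

lemma cv_shl:
  assumes "\<And>j. f 0 (b j) = 0"
  shows "cv f (sh k a) b n = sh k (cv f a b) n"
  using cv_shl_gen[of f 0 b k a n] assms by (simp add: sh_def[abs_def])

lemma cv_addl:
  assumes "\<And>i j. f (c i) (b j) = f (a i) (b j) + f (a' i) (b j)"
  shows "cv f c b n = cv f a b n + cv f a' b n"
  unfolding cv_def by (simp add: assms sum.distrib)

lemma cv_addr: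
  assumes "\<And>i j. f (a i) (c j) = f (a i) (b j) + f (a i) (b' j)"
  shows "cv f a c n = cv f a b n + cv f a b' n"
  unfolding cv_def by (simp add: assms sum.distrib)

fun upd :: "('g \<Rightarrow> 'g \<Rightarrow> 'g::ab_group_add) \<Rightarrow> ('g \<Rightarrow> 'v \<Rightarrow> 'v) \<Rightarrow> nat \<Rightarrow> 'g \<Rightarrow> (nat \<Rightarrow> 'v \<Rightarrow> 'g) \<Rightarrow> nat \<Rightarrow> 'v \<Rightarrow> 'g" where
  "upd br rL k y S n u = S n u + (if 0 < k \<and> k \<le> n then S (n - k) (rL y u) - br y (upd br rL k y S (n - k) u) else 0)"

declare upd.simps[simp del]


lemma vs_rd: "vector_space s \<Longrightarrow> s a (x + y) = s a x + s a y"
  by (simp add: vector_space_def)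
lemma vs_z: "vector_space s \<Longrightarrow> s a 0 = 0"
  using module.scale_zero_right[of s] by (simp add: module_iff_vector_space)
lemma vs_rdd: "vector_space s \<Longrightarrow> s a (x - y) = s a x - s a y"
  using module.scale_right_diff_distrib[of s] by (simp add: module_iff_vector_space)
lemma lin_add: "Vector_Spaces.linear s1 s2 f \<Longrightarrow> Vector_Spaces.linear s1 s2 g \<Longrightarrow> Vector_Spaces.linear s1 s2 (\<lambda>x. f x + g x)"
  unfolding linear_iff by (auto simp: vs_rd)
lemma lin_diff: "Vector_Spaces.linear s1 s2 f \<Longrightarrow> Vector_Spaces.linear s1 s2 g \<Longrightarrow> Vector_Spaces.linear s1 s2 (\<lambda>x. f x - g x)"
  unfolding linear_iff by (auto simp: vs_rdd)
lemma lin_zero: "vector_space s1 \<Longrightarrow> vector_space s2 \<Longrightarrow> Vector_Spaces.linear s1 s2 (\<lambda>x. 0)"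
  unfolding linear_iff by (auto simp: vs_z)
lemma lin_id: "vector_space s1 \<Longrightarrow> Vector_Spaces.linear s1 s1 (\<lambda>x. x)"
  unfolding linear_iff by auto
lemma lin_comp: "Vector_Spaces.linear s1 s2 f \<Longrightarrow> Vector_Spaces.linear s2 s3 g \<Longrightarrow> Vector_Spaces.linear s1 s3 (\<lambda>x. g (f x))"
  using Vector_Spaces.linear_compose[of s1 s2 f s3 g] by (simp add: o_def)
lemma lin_addD: "Vector_Spaces.linear s1 s2 f \<Longrightarrow> f (x + y) = f x + f y"
  unfolding linear_iff by auto

lemma addf:
  fixes f :: "'a::ab_group_add \<Rightarrow> 'b::ab_group_add"
  assumes "\<And>x y. f (x + y) = f x + f y"
  shows "f 0 = 0" "f (- x) = - f x" "f (x - y) = f x - f y" "f (sum g A) = (\<Sum>a\<in>A. f (g a))"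
proof -
  show z: "f 0 = 0" using assms[of 0 0] by simp
  show n: "f (- x) = - f x" for x using assms[of x "-x"] z by (simp add: eq_neg_iff_add_eq_0 add.commute)
  show "f (x - y) = f x - f y" using assms[of x "-y"] n[of y] by simp
  show "f (sum g A) = (\<Sum>a\<in>A. f (g a))"
    by (induction A rule: infinite_finite_induct) (auto simp: z assms)
qed

definition biadd :: "('a::ab_group_add \<Rightarrow> 'b::ab_group_add \<Rightarrow> 'c::ab_group_add) \<Rightarrow> bool" where
  "biadd f \<longleftrightarrow> (\<forall>x x' y. f (x + x') y = f x y + f x' y) \<and> (\<forall>x y y'. f x (y + y') = f x y + f x y')"

lemma biadd_zero:
  assumes "biadd f" shows "f 0 y = 0" "f x 0 = 0"
proof -
  have "f (0 + 0) y = f 0 y + f 0 y" using assms unfolding biadd_def by blast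
  then show "f 0 y = 0" by simp
  have "f x (0 + 0) = f x 0 + f x 0" using assms unfolding biadd_def by blast
  then show "f x 0 = 0" by simp
qed

lemma cv_expand:
  assumes "biadd f"
  shows "cv f (\<lambda>i. a i + sh k a' i) (\<lambda>i. b i + sh k b' i) n =
    cv f a b n + sh k (cv f a' b) n + sh k (cv f a b') n + sh k (\<lambda>m. sh k (cv f a' b') m) n"
proof -
  note z = biadd_zero[OF assms]
  have ad1: "f (x + x') y = f x y + f x' y" and ad2: "f x (y + y') = f x y + f x y'" for x x' y y'
    using assms by (auto simp: biadd_def)
  have "cv f (\<lambda>i. a i + sh k a' i) (\<lambda>i. b i + sh k b' i) n
     = cv f a (\<lambda>i. b i + sh k b' i) n + cv f (sh k a') (\<lambda>i. b i + sh k b' i) n"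
    by (rule cv_addl) (simp add: ad1)
  also have "cv f a (\<lambda>i. b i + sh k b' i) n = cv f a b n + cv f a (sh k b') n"
    by (rule cv_addr) (simp add: ad2)
  also have "cv f a (sh k b') n = sh k (cv f a b') n" by (rule cv_shr) (simp add: z)
  also have "cv f (sh k a') (\<lambda>i. b i + sh k b' i) n = sh k (cv f a' (\<lambda>i. b i + sh k b' i)) n"
    by (rule cv_shl) (simp add: z)
  also have "cv f a' (\<lambda>i. b i + sh k b' i) = (\<lambda>m. cv f a' b m + sh k (cv f a' b') m)"
  proof
    fix m
    have "cv f a' (\<lambda>i. b i + sh k b' i) m = cv f a' b m + cv f a' (sh k b') m"
      by (rule cv_addr) (simp add: ad2)
    also have "cv f a' (sh k b') m = sh k (cv f a' b') m" by (rule cv_shr) (simp add: z)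
    finally show "cv f a' (\<lambda>i. b i + sh k b' i) m = cv f a' b m + sh k (cv f a' b') m" .
  qed
  also have "sh k (\<lambda>m. cv f a' b m + sh k (cv f a' b') m) n = sh k (cv f a' b) n + sh k (\<lambda>m. sh k (cv f a' b') m) n"
    by (rule sh_add)
  finally show ?thesis by (simp add: algebra_simps)
qed



locale LS =
  fixes sg :: "'k::field \<Rightarrow> 'g::ab_group_add \<Rightarrow> 'g"
    and br :: "'g \<Rightarrow> 'g \<Rightarrow> 'g"
    and sv :: "'k \<Rightarrow> 'v::ab_group_add \<Rightarrow> 'v"
    and rL rR :: "'g \<Rightarrow> 'v \<Rightarrow> 'v"
    and T :: "'v \<Rightarrow> 'g"
  assumes LA: "leibniz_algebra sg br"
    and LR: "leibniz_rep sg br sv rL rR"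
    and RB: "rel_RB sg br sv rL rR T"
begin

lemma vsg: "vector_space sg" using LA unfolding leibniz_algebra_def by blast
lemma vsv: "vector_space sv" using LR unfolding leibniz_rep_def by blast
lemma linbr2: "Vector_Spaces.linear sg sg (br x)" using LA unfolding leibniz_algebra_def by blast
lemma linbr1: "Vector_Spaces.linear sg sg (\<lambda>x. br x y)" using LA unfolding leibniz_algebra_def by blast
lemma linrL2: "Vector_Spaces.linear sv sv (rL x)" using LR unfolding leibniz_rep_def by blast
lemma linrR2: "Vector_Spaces.linear sv sv (rR x)" using LR unfolding leibniz_rep_def by blast
lemma linrL1: "Vector_Spaces.linear sg sv (\<lambda>x. rL x v)" using LR unfolding leibniz_rep_def by blast
lemma linrR1: "Vector_Spaces.linear sg sv (\<lambda>x. rR x v)" using LR unfolding leibniz_rep_def by blast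
lemma linT: "Vector_Spaces.linear sv sg T" using RB unfolding rel_RB_def by blast

lemma leib: "br x (br y z) = br (br x y) z + br y (br x z)" using LA unfolding leibniz_algebra_def by blast
lemma repL: "rL (br x y) v = rL x (rL y v) - rL y (rL x v)" using LR unfolding leibniz_rep_def by blast
lemma repR: "rR (br x y) v = rL x (rR y v) - rR y (rL x v)" using LR unfolding leibniz_rep_def by blast
lemma rbT: "br (T v1) (T v2) = T (rL (T v1) v2 + rR (T v2) v1)" using RB unfolding rel_RB_def by blast

lemma br_add1: "br (a + b) c = br a c + br b c" using lin_addD[OF linbr1] .
lemma br_add2: "br c (a + b) = br c a + br c b" using lin_addD[OF linbr2] .
lemma rL_add1: "rL (a + b) v = rL a v + rL b v" using lin_addD[OF linrL1] .
lemma rL_add2: "rL c (a + b) = rL c a + rL c b" using lin_addD[OF linrL2] .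
lemma rR_add1: "rR (a + b) v = rR a v + rR b v" using lin_addD[OF linrR1] .
lemma rR_add2: "rR c (a + b) = rR c a + rR c b" using lin_addD[OF linrR2] .
lemma T_add: "T (a + b) = T a + T b" using lin_addD[OF linT] .

lemmas br_1 = addf[of "\<lambda>x. br x y" for y, OF br_add1]
lemmas br_2 = addf[of "br x" for x, OF br_add2]
lemmas rL_1 = addf[of "\<lambda>x. rL x y" for y, OF rL_add1]
lemmas rL_2 = addf[of "rL x" for x, OF rL_add2]
lemmas rR_1 = addf[of "\<lambda>x. rR x y" for y, OF rR_add1]
lemmas rR_2 = addf[of "rR x" for x, OF rR_add2]
lemmas T_a = addf[of T, OF T_add]

lemmas algs = br_add1 br_add2 rL_add1 rL_add2 rR_add1 rR_add2 T_add
  br_1(1-3) br_2(1-3) rL_1(1-3) rL_2(1-3) rR_1(1-3) rR_2(1-3) T_a(1-3)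

lemma biadd_br: "biadd br" by (simp add: biadd_def br_add1 br_add2)
lemma biadd_rL: "biadd rL" by (simp add: biadd_def rL_add1 rL_add2)
lemma biadd_rR: "biadd rR" by (simp add: biadd_def rR_add1 rR_add2)

lemma NijD:
  assumes "y \<in> Nij br rL rR T"
  shows "br (br y a) (br y b) = 0" "rL (br y a) (rL y u) = 0" "rR (br y a) (rL y u) = 0"
  using assms by (auto simp: Nij_def)

definition defeq :: "(nat \<Rightarrow> 'v \<Rightarrow> 'g) \<Rightarrow> bool" where
  "defeq S \<longleftrightarrow> (\<forall>n u v. cv br (\<lambda>i. S i u) (\<lambda>i. S i v) n
      = cv (\<lambda>f x. f x) S (\<lambda>m. rL (S m u) v + rR (S m v) u) n)"

lemma aut:
  assumes y: "y \<in> Nij br rL rR T"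
  shows "cv br (\<lambda>i. s i + sh k (\<lambda>m. br y (s m)) i) (\<lambda>i. t i + sh k (\<lambda>m. br y (t m)) i) n
       = cv br s t n + sh k (\<lambda>m. br y (cv br s t m)) n"
proof -
  let ?A = "cv br s t n" and ?B = "sh k (cv br (\<lambda>m. br y (s m)) t) n"
    and ?C = "sh k (cv br s (\<lambda>m. br y (t m))) n"
    and ?D = "sh k (\<lambda>m. sh k (cv br (\<lambda>m. br y (s m)) (\<lambda>m. br y (t m))) m) n"
  have e1: "cv br (\<lambda>i. s i + sh k (\<lambda>m. br y (s m)) i) (\<lambda>i. t i + sh k (\<lambda>m. br y (t m)) i) n
    = ?A + ?B + ?C + ?D"
    by (rule cv_expand[OF biadd_br])
  have e2: "cv br (\<lambda>m. br y (s m)) (\<lambda>m. br y (t m)) m = 0" for m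
    by (simp add: cv_def NijD[OF y])
  have l: "br (br y a) b + br a (br y b) = br y (br a b)" for a b using leib[of y a b] by simp
  have e3: "cv br (\<lambda>m. br y (s m)) t m + cv br s (\<lambda>m. br y (t m)) m = br y (cv br s t m)" for m
    by (simp add: cv_def sum.distrib[symmetric] br_2(4) l)
  have e4: "?B + ?C = sh k (\<lambda>m. br y (cv br s t m)) n"
    using sh_add[of k "cv br (\<lambda>m. br y (s m)) t" "cv br s (\<lambda>m. br y (t m))" n] e3 by simp
  have e5: "?D = 0" by (simp add: sh_def e2)
  have "?A + ?B + ?C + ?D = ?A + (?B + ?C) + ?D" by (simp only: add.assoc)
  also have "\<dots> = ?A + sh k (\<lambda>m. br y (cv br s t m)) n" by (simp only: e4 e5 add_0_right)
  finally show ?thesis using e1 by simp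
qed

lemma phi_inj:
  assumes k: "0 < k" and "\<And>n. s n + sh k (\<lambda>m. br y (s m)) n = s' n + sh k (\<lambda>m. br y (s' m)) n"
  shows "s n = s' n"
proof (induction n rule: less_induct)
  case (less n)
  show ?case
  proof (cases "k \<le> n")
    case True
    then have "s (n - k) = s' (n - k)" using less k by simp
    then show ?thesis using assms(2)[of n] True by (simp add: sh_def)
  next
    case False
    then show ?thesis using assms(2)[of n] by (simp add: sh_def)
  qed
qed


lemma cvA_add:
  assumes "\<And>i x y. S i (x + y) = S i x + S i y"
  shows "cv (\<lambda>f x. f x) S (\<lambda>m. p m + q m) n = cv (\<lambda>f x. f x) S p n + cv (\<lambda>f x. f x) S q n"
  by (rule cv_addr) (simp add: assms)

lemma cvA_sh:
  assumes "\<And>i. S i 0 = 0"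
  shows "cv (\<lambda>f x. f x) S (sh k p) = sh k (cv (\<lambda>f x. f x) S p)"
  by (rule ext, rule cv_shr) (simp add: assms)

definition phup :: "nat \<Rightarrow> 'g \<Rightarrow> (nat \<Rightarrow> 'g \<Rightarrow> 'g) \<Rightarrow> nat \<Rightarrow> 'g \<Rightarrow> 'g" where
  "phup k' y' P = (\<lambda>n g. P n g + sh k' (\<lambda>j. P j (br y' g)) n)"
definition psup :: "nat \<Rightarrow> 'g \<Rightarrow> (nat \<Rightarrow> 'v \<Rightarrow> 'v) \<Rightarrow> nat \<Rightarrow> 'v \<Rightarrow> 'v" where
  "psup k' y' Q = (\<lambda>n u. Q n u + sh k' (\<lambda>j. Q j (rL y' u)) n)"

definition goodops :: "(nat \<Rightarrow> 'v \<Rightarrow> 'g) \<Rightarrow> (nat \<Rightarrow> 'v \<Rightarrow> 'g) \<Rightarrow> (nat \<Rightarrow> 'g \<Rightarrow> 'g) \<Rightarrow> (nat \<Rightarrow> 'v \<Rightarrow> 'v) \<Rightarrow> bool" where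
  "goodops Ts S' P Q \<longleftrightarrow> (\<forall>i. Vector_Spaces.linear sg sg (P i)) \<and> (\<forall>i. Vector_Spaces.linear sv sv (Q i))
    \<and> P 0 = id \<and> Q 0 = id
    \<and> (\<forall>n a b. cv br (\<lambda>i. P i a) (\<lambda>i. P i b) n = P n (br a b))
    \<and> (\<forall>n z u. Q n (rL z u) = cv rL (\<lambda>i. P i z) (\<lambda>i. Q i u) n)
    \<and> (\<forall>n z u. Q n (rR z u) = cv rR (\<lambda>i. P i z) (\<lambda>i. Q i u) n)
    \<and> (\<forall>n u. cv (\<lambda>f x. f x) Ts (\<lambda>i. Q i u) n = cv (\<lambda>f x. f x) P (\<lambda>i. S' i u) n)"

context
  fixes k :: nat and y :: 'g and S :: "nat \<Rightarrow> 'v \<Rightarrow> 'g"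
  assumes k: "0 < k" and lin: "\<And>i. Vector_Spaces.linear sv sg (S i)"
    and S0: "S 0 = T" and de: "defeq S"
    and zS: "\<And>j u. 0 < j \<Longrightarrow> j < k \<Longrightarrow> S j u = 0"
    and y: "y \<in> Nij br rL rR T"
    and dy: "\<And>u. T (rL y u) - br y (T u) = - S k u"
begin

lemma Sadd: "S i (a + b) = S i a + S i b" using lin_addD[OF lin] .
lemma S_0: "S i 0 = 0" using addf(1)[of "S i", OF Sadd] .

lemma upd_eq: "upd br rL k y S n u = S n u + (if k \<le> n then S (n - k) (rL y u) - br y (upd br rL k y S (n - k) u) else 0)"
  using upd.simps[of br rL k y S n u] k by simp

lemma rel: "upd br rL k y S n u + sh k (\<lambda>m. br y (upd br rL k y S m u)) n = S n u + sh k (\<lambda>m. S m (rL y u)) n"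
  by (simp add: upd_eq[of n] sh_def)

lemma lin': "Vector_Spaces.linear sv sg (upd br rL k y S n)"
proof (induction n rule: less_induct)
  case (less n)
  have e: "upd br rL k y S n = (\<lambda>u. S n u + (if k \<le> n then S (n - k) (rL y u) - br y (upd br rL k y S (n - k) u) else 0))"
    by (rule ext, rule upd_eq)
  show ?case
  proof (cases "k \<le> n")
    case True
    have "Vector_Spaces.linear sv sg (upd br rL k y S (n - k))" using less k True by simp
    then have "Vector_Spaces.linear sv sg (\<lambda>u. S n u + (S (n - k) (rL y u) - br y (upd br rL k y S (n - k) u)))"
      by (intro lin_add lin_diff lin_comp[OF linrL2] lin_comp[OF _ linbr2] lin)
    then show ?thesis using True e by simp
  next
    case False
    have "Vector_Spaces.linear sv sg (\<lambda>u. S n u + 0)"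
      by (intro lin_add lin lin_zero vsv vsg)
    then show ?thesis using False e by simp
  qed
qed

lemma upd0: "upd br rL k y S 0 u = T u"
  using upd_eq[of 0 u] k S0 by simp

lemma updz: "0 < j \<Longrightarrow> j \<le> k \<Longrightarrow> upd br rL k y S j u = 0"
  using upd_eq[of j u] zS[of j u] upd0 S0 dy[of u] by (cases "j = k") auto


lemma de':
  fixes u v
  defines "S' \<equiv> upd br rL k y S"
  shows "cv br (\<lambda>i. S' i u) (\<lambda>i. S' i v) n = cv (\<lambda>f x. f x) S' (\<lambda>m. rL (S' m u) v + rR (S' m v) u) n"
proof -
  define a where "a = (\<lambda>n. S' n u)"
  define b where "b = (\<lambda>n. S' n v)"
  define w where "w = (\<lambda>m. rL (a m) v + rR (b m) u)"
  define A where "A = cv br a b"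
  define B where "B = cv (\<lambda>f x. f x) S' w"
  define u' where "u' = rL y u"
  define v' where "v' = rL y v"
  define Pu where "Pu = (\<lambda>n. S n u + sh k (\<lambda>m. S m u') n)"
  define Pv where "Pv = (\<lambda>n. S n v + sh k (\<lambda>m. S m v') n)"
  define W where "W = (\<lambda>p q m. rL (S m p) q + rR (S m q) p)"
  define Z where "Z = (\<lambda>m. W u v m + sh k (W u' v) m + sh k (W u v') m + sh k (\<lambda>j. sh k (W u' v') j) m)"
  have ra: "(\<lambda>i. a i + sh k (\<lambda>m. br y (a m)) i) = Pu"
    using rel unfolding a_def Pu_def S'_def u'_def by auto
  have rb: "(\<lambda>i. b i + sh k (\<lambda>m. br y (b m)) i) = Pv"
    using rel unfolding b_def Pv_def S'_def v'_def by auto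
  have h1: "A n + sh k (\<lambda>m. br y (A m)) n = cv br Pu Pv n" for n
    using aut[OF y, of a k b n] ra rb by (simp add: A_def)
  have deW: "cv br (\<lambda>i. S i p) (\<lambda>i. S i q) = cv (\<lambda>f x. f x) S (W p q)" for p q
    using de unfolding defeq_def W_def by auto
  note cA = cvA_add[of S, OF Sadd] cvA_sh[of S, OF S_0]
  have h2: "cv br Pu Pv n = cv (\<lambda>f x. f x) S Z n" for n
  proof -
    have "cv br Pu Pv n = cv br (\<lambda>i. S i u) (\<lambda>i. S i v) n + sh k (cv br (\<lambda>i. S i u') (\<lambda>i. S i v)) n
       + sh k (cv br (\<lambda>i. S i u) (\<lambda>i. S i v')) n + sh k (\<lambda>m. sh k (cv br (\<lambda>i. S i u') (\<lambda>i. S i v')) m) n"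
      unfolding Pu_def Pv_def by (rule cv_expand[OF biadd_br])
    also have "\<dots> = cv (\<lambda>f x. f x) S Z n"
      unfolding deW Z_def by (simp add: cA)
    finally show ?thesis .
  qed
  have h3: "Z m = w m + sh k (\<lambda>j. rL y (w j)) m" for m
  proof -
    have sA: "Z m = rL (Pu m) v + sh k (\<lambda>j. rL (Pu j) v') m + rR (Pv m) u + sh k (\<lambda>j. rR (Pv j) u') m"
      unfolding Z_def W_def Pu_def Pv_def
      by (cases "k \<le> m"; cases "k \<le> m - k") (simp_all add: sh_def algs add_ac)
    have PuE: "Pu j = a j + sh k (\<lambda>m. br y (a m)) j" for j using ra by metis
    have PvE: "Pv j = b j + sh k (\<lambda>m. br y (b m)) j" for j using rb by metis
    show ?thesis
    proof (cases "k \<le> m")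
      case False
      then show ?thesis using sA by (simp add: PuE PvE sh_def w_def)
    next
      case True
      have e1: "rL (Pu (m - k)) v' = rL (a (m - k)) v'"
        by (simp add: PuE sh_def algs v'_def NijD[OF y])
      have e2: "rR (Pv (m - k)) u' = rR (b (m - k)) u'"
        by (simp add: PvE sh_def algs u'_def NijD[OF y])
      have "Z m = rL (a m + br y (a (m - k))) v + rL (a (m - k)) v' + rR (b m + br y (b (m - k))) u + rR (b (m - k)) u'"
        using sA True e1 e2 by (simp add: PuE PvE sh_def)
      also have "\<dots> = w m + rL y (w (m - k))"
        by (simp add: algs repL[of y "a (m - k)" v] repR[of y "b (m - k)" u] w_def u'_def v'_def)
      finally show ?thesis using True by (simp add: sh_def)
    qed
  qed
  have h4: "cv (\<lambda>f x. f x) S (\<lambda>m. w m + sh k (\<lambda>j. rL y (w j)) m) n = B n + sh k (\<lambda>m. br y (B m)) n" for n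
  proof -
    have opeq: "(\<lambda>i x. S i x + (if k \<le> i then S (i - k) (rL y x) else 0))
       = (\<lambda>i x. S' i x + (if k \<le> i then br y (S' (i - k) x) else 0))"
      using rel unfolding S'_def sh_def by (intro ext) (metis add_0_right)
    have "cv (\<lambda>f x. f x) S (\<lambda>m. w m + sh k (\<lambda>j. rL y (w j)) m) n
        = cv (\<lambda>f x. f x) S w n + sh k (cv (\<lambda>f x. f x) S (\<lambda>j. rL y (w j))) n"
      by (simp add: cA)
    also have "cv (\<lambda>f x. f x) S (\<lambda>j. rL y (w j)) = cv (\<lambda>f x. f x) (\<lambda>i x. S i (rL y x)) w"
      by (simp add: cv_def[abs_def])
    also have "cv (\<lambda>f x. f x) S w n + sh k (cv (\<lambda>f x. f x) (\<lambda>i x. S i (rL y x)) w) n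
       = cv (\<lambda>f x. f x) (\<lambda>i x. S i x + (if k \<le> i then S (i - k) (rL y x) else 0)) w n"
    proof -
      have "cv (\<lambda>f x. f x) (\<lambda>i x. S i x + (if k \<le> i then S (i - k) (rL y x) else 0)) w n
         = cv (\<lambda>f x. f x) S w n + cv (\<lambda>f x. f x) (\<lambda>i. if k \<le> i then (\<lambda>x. S (i - k) (rL y x)) else (\<lambda>x. 0)) w n"
        by (rule cv_addl) simp
      also have "cv (\<lambda>f x. f x) (\<lambda>i. if k \<le> i then (\<lambda>x. S (i - k) (rL y x)) else (\<lambda>x. 0)) w n
          = sh k (cv (\<lambda>f x. f x) (\<lambda>i x. S i (rL y x)) w) n"
        by (rule cv_shl_gen[of "\<lambda>f x. f x" "\<lambda>x. 0", simplified])
      finally show ?thesis by simp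
    qed
    also have "\<dots> = cv (\<lambda>f x. f x) (\<lambda>i x. S' i x + (if k \<le> i then br y (S' (i - k) x) else 0)) w n"
      by (simp only: opeq)
    also have "\<dots> = B n + sh k (cv (\<lambda>f x. f x) (\<lambda>i x. br y (S' i x)) w) n"
    proof -
      have "cv (\<lambda>f x. f x) (\<lambda>i x. S' i x + (if k \<le> i then br y (S' (i - k) x) else 0)) w n
         = cv (\<lambda>f x. f x) S' w n + cv (\<lambda>f x. f x) (\<lambda>i. if k \<le> i then (\<lambda>x. br y (S' (i - k) x)) else (\<lambda>x. 0)) w n"
        by (rule cv_addl) simp
      also have "cv (\<lambda>f x. f x) (\<lambda>i. if k \<le> i then (\<lambda>x. br y (S' (i - k) x)) else (\<lambda>x. 0)) w n
          = sh k (cv (\<lambda>f x. f x) (\<lambda>i x. br y (S' i x)) w) n"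
        by (rule cv_shl_gen[of "\<lambda>f x. f x" "\<lambda>x. 0", simplified])
      finally show ?thesis by (simp add: B_def)
    qed
    also have "cv (\<lambda>f x. f x) (\<lambda>i x. br y (S' i x)) w = (\<lambda>m. br y (B m))"
      by (simp add: B_def cv_def[abs_def] br_2(4))
    finally show ?thesis .
  qed
  have "A n + sh k (\<lambda>m. br y (A m)) n = B n + sh k (\<lambda>m. br y (B m)) n" for n
  proof -
    have "Z = (\<lambda>m. w m + sh k (\<lambda>j. rL y (w j)) m)" using h3 by (rule ext)
    then show ?thesis using h1 h2 h4 by simp
  qed
  then have "A n = B n" by (rule phi_inj[OF k])
  then show ?thesis by (simp add: A_def B_def a_def b_def w_def)
qed

lemma goodops_step:
  assumes g: "goodops Ts S P Q" and linTs: "\<And>i. Vector_Spaces.linear sv sg (Ts i)"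
  shows "goodops Ts (upd br rL k y S) (phup k y P) (psup k y Q)"
proof -
  define S' where "S' = upd br rL k y S"
  have linP: "Vector_Spaces.linear sg sg (P i)" for i using g by (simp add: goodops_def)
  have linQ: "Vector_Spaces.linear sv sv (Q i)" for i using g by (simp add: goodops_def)
  have P0: "P 0 = id" and Q0: "Q 0 = id" using g by (simp_all add: goodops_def)
  have au: "cv br (\<lambda>i. P i a) (\<lambda>i. P i b) n = P n (br a b)" for n a b using g by (simp add: goodops_def)
  have cL: "Q n (rL z u) = cv rL (\<lambda>i. P i z) (\<lambda>i. Q i u) n" for n z u using g by (simp add: goodops_def)
  have cR: "Q n (rR z u) = cv rR (\<lambda>i. P i z) (\<lambda>i. Q i u) n" for n z u using g by (simp add: goodops_def)
  have re: "cv (\<lambda>f x. f x) Ts (\<lambda>i. Q i u) n = cv (\<lambda>f x. f x) P (\<lambda>i. S i u) n" for n u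
    using g by (simp add: goodops_def)
  have au': "cv br (\<lambda>i. P i a) (\<lambda>i. P i b) = (\<lambda>m. P m (br a b))" for a b using au by (rule ext)
  have cL': "cv rL (\<lambda>i. P i z) (\<lambda>i. Q i u) = (\<lambda>m. Q m (rL z u))" for z u using cL by (intro ext) (rule sym)
  have cR': "cv rR (\<lambda>i. P i z) (\<lambda>i. Q i u) = (\<lambda>m. Q m (rR z u))" for z u using cR by (intro ext) (rule sym)
  have re': "cv (\<lambda>f x. f x) Ts (\<lambda>i. Q i u) = cv (\<lambda>f x. f x) P (\<lambda>i. S i u)" for u using re by (rule ext)
  have Padd: "P i (a + b) = P i a + P i b" for i a b using lin_addD[OF linP] .
  have Qadd: "Q i (a + b) = Q i a + Q i b" for i a b using lin_addD[OF linQ] .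
  have P_0: "P i 0 = 0" for i using addf(1)[of "P i", OF Padd] .
  have Q_0: "Q i 0 = 0" for i using addf(1)[of "Q i", OF Qadd] .
  have Tsadd: "Ts i (a + b) = Ts i a + Ts i b" for i a b using lin_addD[OF linTs] .
  have Ts_0: "Ts i 0 = 0" for i using addf(1)[of "Ts i", OF Tsadd] .
  have l1: "Vector_Spaces.linear sg sg (phup k y P n)" for n
  proof (cases "k \<le> n")
    case True
    have "Vector_Spaces.linear sg sg (\<lambda>g. P n g + P (n - k) (br y g))"
      by (intro lin_add linP lin_comp[OF linbr2])
    then show ?thesis using True by (simp add: phup_def sh_def)
  next
    case False
    have "Vector_Spaces.linear sg sg (\<lambda>g. P n g + 0)" by (intro lin_add linP lin_zero vsg)
    then show ?thesis using False by (simp add: phup_def sh_def)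
  qed
  have l2: "Vector_Spaces.linear sv sv (psup k y Q n)" for n
  proof (cases "k \<le> n")
    case True
    have "Vector_Spaces.linear sv sv (\<lambda>g. Q n g + Q (n - k) (rL y g))"
      by (intro lin_add linQ lin_comp[OF linrL2])
    then show ?thesis using True by (simp add: psup_def sh_def)
  next
    case False
    have "Vector_Spaces.linear sv sv (\<lambda>g. Q n g + 0)" by (intro lin_add linQ lin_zero vsv)
    then show ?thesis using False by (simp add: psup_def sh_def)
  qed
  have z0: "phup k y P 0 = id" "psup k y Q 0 = id"
    using k P0 Q0 by (auto simp: phup_def psup_def sh_def)
  have a2: "cv br (\<lambda>i. phup k y P i a) (\<lambda>i. phup k y P i b) n = phup k y P n (br a b)" for n a b
  proof -
    have "cv br (\<lambda>i. phup k y P i a) (\<lambda>i. phup k y P i b) n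
      = cv br (\<lambda>i. P i a) (\<lambda>i. P i b) n + sh k (cv br (\<lambda>j. P j (br y a)) (\<lambda>i. P i b)) n
       + sh k (cv br (\<lambda>i. P i a) (\<lambda>j. P j (br y b))) n
       + sh k (\<lambda>m. sh k (cv br (\<lambda>j. P j (br y a)) (\<lambda>j. P j (br y b))) m) n"
      unfolding phup_def by (rule cv_expand[OF biadd_br])
    also have "\<dots> = P n (br a b) + sh k (\<lambda>m. P m (br (br y a) b)) n + sh k (\<lambda>m. P m (br a (br y b))) n
       + sh k (\<lambda>m. sh k (\<lambda>m. P m (br (br y a) (br y b))) m) n"
      by (simp only: au au')
    also have "\<dots> = P n (br a b) + sh k (\<lambda>m. P m (br y (br a b))) n"
      using leib[of y a b] by (simp add: NijD[OF y] P_0 sh_def Padd[symmetric])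
    finally show ?thesis by (simp add: phup_def)
  qed
  have a3: "psup k y Q n (rL z u) = cv rL (\<lambda>i. phup k y P i z) (\<lambda>i. psup k y Q i u) n" for n z u
  proof -
    have "cv rL (\<lambda>i. phup k y P i z) (\<lambda>i. psup k y Q i u) n
      = cv rL (\<lambda>i. P i z) (\<lambda>i. Q i u) n + sh k (cv rL (\<lambda>j. P j (br y z)) (\<lambda>i. Q i u)) n
       + sh k (cv rL (\<lambda>i. P i z) (\<lambda>j. Q j (rL y u))) n
       + sh k (\<lambda>m. sh k (cv rL (\<lambda>j. P j (br y z)) (\<lambda>j. Q j (rL y u))) m) n"
      unfolding phup_def psup_def by (rule cv_expand[OF biadd_rL])
    also have "\<dots> = Q n (rL z u) + sh k (\<lambda>m. Q m (rL (br y z) u)) n + sh k (\<lambda>m. Q m (rL z (rL y u))) n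
       + sh k (\<lambda>m. sh k (\<lambda>m. Q m (rL (br y z) (rL y u))) m) n"
      by (simp only: cL[symmetric] cL')
    also have "\<dots> = Q n (rL z u) + sh k (\<lambda>m. Q m (rL y (rL z u))) n"
      by (simp add: NijD[OF y] Q_0 sh_def repL[of y z u] Qadd[symmetric])
    finally show ?thesis by (simp add: psup_def)
  qed
  have a4: "psup k y Q n (rR z u) = cv rR (\<lambda>i. phup k y P i z) (\<lambda>i. psup k y Q i u) n" for n z u
  proof -
    have "cv rR (\<lambda>i. phup k y P i z) (\<lambda>i. psup k y Q i u) n
      = cv rR (\<lambda>i. P i z) (\<lambda>i. Q i u) n + sh k (cv rR (\<lambda>j. P j (br y z)) (\<lambda>i. Q i u)) n
       + sh k (cv rR (\<lambda>i. P i z) (\<lambda>j. Q j (rL y u))) n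
       + sh k (\<lambda>m. sh k (cv rR (\<lambda>j. P j (br y z)) (\<lambda>j. Q j (rL y u))) m) n"
      unfolding phup_def psup_def by (rule cv_expand[OF biadd_rR])
    also have "\<dots> = Q n (rR z u) + sh k (\<lambda>m. Q m (rR (br y z) u)) n + sh k (\<lambda>m. Q m (rR z (rL y u))) n
       + sh k (\<lambda>m. sh k (\<lambda>m. Q m (rR (br y z) (rL y u))) m) n"
      by (simp only: cR[symmetric] cR')
    also have "\<dots> = Q n (rR z u) + sh k (\<lambda>m. Q m (rL y (rR z u))) n"
      by (simp add: NijD[OF y] Q_0 sh_def repR[of y z u] Qadd[symmetric])
    finally show ?thesis by (simp add: psup_def)
  qed
  have a5: "cv (\<lambda>f x. f x) Ts (\<lambda>i. psup k y Q i u) n = cv (\<lambda>f x. f x) (phup k y P) (\<lambda>i. S' i u) n" for n u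
  proof -
    note cT = cvA_add[of Ts, OF Tsadd] cvA_sh[of Ts, OF Ts_0]
    note cP = cvA_add[of P, OF Padd] cvA_sh[of P, OF P_0]
    have rS: "(\<lambda>i. S i u + sh k (\<lambda>j. S j (rL y u)) i) = (\<lambda>i. S' i u + sh k (\<lambda>j. br y (S' j u)) i)"
      using rel unfolding S'_def by (intro ext) metis
    have "cv (\<lambda>f x. f x) Ts (\<lambda>i. psup k y Q i u) n
       = cv (\<lambda>f x. f x) Ts (\<lambda>i. Q i u) n + sh k (cv (\<lambda>f x. f x) Ts (\<lambda>i. Q i (rL y u))) n"
      unfolding psup_def by (simp add: cT)
    also have "\<dots> = cv (\<lambda>f x. f x) P (\<lambda>i. S i u) n + sh k (cv (\<lambda>f x. f x) P (\<lambda>i. S i (rL y u))) n"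
      by (simp only: re re')
    also have "\<dots> = cv (\<lambda>f x. f x) P (\<lambda>i. S i u + sh k (\<lambda>j. S j (rL y u)) i) n"
      by (simp add: cP)
    also have "\<dots> = cv (\<lambda>f x. f x) P (\<lambda>i. S' i u + sh k (\<lambda>j. br y (S' j u)) i) n"
      by (simp only: rS)
    also have "\<dots> = cv (\<lambda>f x. f x) P (\<lambda>i. S' i u) n + sh k (cv (\<lambda>f x. f x) P (\<lambda>j. br y (S' j u))) n"
      by (simp add: cP)
    also have "cv (\<lambda>f x. f x) P (\<lambda>j. br y (S' j u)) = cv (\<lambda>f x. f x) (\<lambda>i g. P i (br y g)) (\<lambda>i. S' i u)"
      by (simp add: cv_def[abs_def])
    also have "cv (\<lambda>f x. f x) P (\<lambda>i. S' i u) n + sh k (cv (\<lambda>f x. f x) (\<lambda>i g. P i (br y g)) (\<lambda>i. S' i u)) n = cv (\<lambda>f x. f x) (phup k y P) (\<lambda>i. S' i u) n"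
    proof -
      have "cv (\<lambda>f x. f x) (phup k y P) (\<lambda>i. S' i u) n
         = cv (\<lambda>f x. f x) P (\<lambda>i. S' i u) n + cv (\<lambda>f x. f x) (\<lambda>i. if k \<le> i then (\<lambda>g. P (i - k) (br y g)) else (\<lambda>g. 0)) (\<lambda>i. S' i u) n"
        by (rule cv_addl) (simp add: phup_def sh_def)
      also have "cv (\<lambda>f x. f x) (\<lambda>i. if k \<le> i then (\<lambda>g. P (i - k) (br y g)) else (\<lambda>g. 0)) (\<lambda>i. S' i u) n
          = sh k (cv (\<lambda>f x. f x) (\<lambda>i g. P i (br y g)) (\<lambda>i. S' i u)) n"
        by (rule cv_shl_gen[of "\<lambda>f x. f x" "\<lambda>x. 0", simplified])
      finally show ?thesis by simp
    qed
    finally show ?thesis .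
  qed
  show ?thesis unfolding goodops_def S'_def[symmetric]
    using l1 l2 z0 a2 a3 a4 a5 by simp
qed
end


lemma sum_two:
  fixes k :: nat and g :: "nat \<Rightarrow> 'a::comm_monoid_add"
  assumes "0 < k" "\<And>i. 0 < i \<Longrightarrow> i < k \<Longrightarrow> g i = 0"
  shows "sum g {..k} = g 0 + g k"
proof -
  have "sum g {0, k} = sum g {..k}"
    using assms by (intro sum.mono_neutral_left) auto
  then show ?thesis using assms(1) by simp
qed

lemma sum_single:
  fixes n :: nat and g :: "nat \<Rightarrow> 'a::comm_monoid_add"
  assumes "j \<le> n" "\<And>i. i \<le> n \<Longrightarrow> i \<noteq> j \<Longrightarrow> g i = 0"
  shows "sum g {..n} = g j"
proof -
  have "sum g {j} = sum g {..n}"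
    using assms by (intro sum.mono_neutral_left) auto
  then show ?thesis by simp
qed

lemma negZ1:
  assumes k: "0 < k" and lin: "\<And>i. Vector_Spaces.linear sv sg (S i)"
    and S0: "S 0 = T" and de: "defeq S"
    and zS: "\<And>j u. 0 < j \<Longrightarrow> j < k \<Longrightarrow> S j u = 0"
  shows "(\<lambda>u. - S k u) \<in> Z1 sg br sv rL rR T"
proof -
  have Sadd: "S i (a + b) = S i a + S i b" for i a b using lin_addD[OF lin] .
  note Sa = addf[of "S i" for i, OF Sadd]
  have lk: "Vector_Spaces.linear sv sg (\<lambda>u. - S k u)"
    using lin_diff[OF lin_zero[OF vsv vsg] lin[of k]] by simp
  have eq: "br (T u) (S k v) + br (S k u) (T v) = T (rL (S k u) v + rR (S k v) u) + S k (rL (T u) v + rR (T v) u)" for u v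
  proof -
    have "cv br (\<lambda>i. S i u) (\<lambda>i. S i v) k = cv (\<lambda>f x. f x) S (\<lambda>m. rL (S m u) v + rR (S m v) u) k"
      using de by (simp add: defeq_def)
    moreover have "cv br (\<lambda>i. S i u) (\<lambda>i. S i v) k = br (T u) (S k v) + br (S k u) (T v)"
      unfolding cv_def by (subst sum_two[OF k]) (auto simp: zS S0 algs)
    moreover have "cv (\<lambda>f x. f x) S (\<lambda>m. rL (S m u) v + rR (S m v) u) k = T (rL (S k u) v + rR (S k v) u) + S k (rL (T u) v + rR (T v) u)"
      unfolding cv_def by (subst sum_two[OF k]) (auto simp: zS S0)
    ultimately show ?thesis by simp
  qed
  have "dT1 br rL rR T (\<lambda>u. - S k u) u v = 0" for u v
    using eq[of u v] by (simp add: dT1_def algs Sa(2) algebra_simps)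
  then show ?thesis using lk by (simp add: Z1_def)
qed

definition ych :: "nat \<Rightarrow> (nat \<Rightarrow> 'v \<Rightarrow> 'g) \<Rightarrow> 'g" where
  "ych k S = (SOME y. y \<in> Nij br rL rR T \<and> dT0 br rL T y = (\<lambda>u. - S k u))"

primrec stg :: "(nat \<Rightarrow> 'v \<Rightarrow> 'g) \<Rightarrow> nat \<Rightarrow> (nat \<Rightarrow> 'v \<Rightarrow> 'g) \<times> (nat \<Rightarrow> 'g \<Rightarrow> 'g) \<times> (nat \<Rightarrow> 'v \<Rightarrow> 'v)" where
  "stg Ts 0 = (Ts, \<lambda>i. if i = 0 then id else (\<lambda>x. 0), \<lambda>i. if i = 0 then id else (\<lambda>x. 0))"
| "stg Ts (Suc m) = (case stg Ts m of (S, P, Q) \<Rightarrow>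
     (upd br rL (Suc m) (ych (Suc m) S) S, phup (Suc m) (ych (Suc m) S) P, psup (Suc m) (ych (Suc m) S) Q))"

definition invs :: "(nat \<Rightarrow> 'v \<Rightarrow> 'g) \<Rightarrow> nat \<Rightarrow> bool" where
  "invs Ts m \<longleftrightarrow> (case stg Ts m of (S, P, Q) \<Rightarrow>
     (\<forall>i. Vector_Spaces.linear sv sg (S i)) \<and> S 0 = T \<and> defeq S
     \<and> (\<forall>j u. 0 < j \<and> j \<le> m \<longrightarrow> S j u = 0) \<and> goodops Ts S P Q)"

lemma lin_idf: "vector_space s \<Longrightarrow> Vector_Spaces.linear s s id"
  using lin_id[of s] by (simp add: id_def)

lemma inv_all:
  assumes hyp: "Z1 sg br sv rL rR T = dT0 br rL T ` Nij br rL rR T"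
    and fd: "formal_deformation sg br sv rL rR T Ts"
  shows "invs Ts m"
proof (induction m)
  case 0
  have linTs: "Vector_Spaces.linear sv sg (Ts i)" for i using fd by (simp add: formal_deformation_def)
  have Tsadd: "Ts i (a + b) = Ts i a + Ts i b" for i a b using lin_addD[OF linTs] .
  have Ts_0: "Ts i 0 = 0" for i using addf(1)[of "Ts i", OF Tsadd] .
  have T0: "Ts 0 = T" using fd by (simp add: formal_deformation_def)
  have de: "defeq Ts" using fd unfolding formal_deformation_def defeq_def cv_def by blast
  define D :: "nat \<Rightarrow> 'g \<Rightarrow> 'g" where "D = (\<lambda>i. if i = 0 then id else (\<lambda>x. 0))"
  define E :: "nat \<Rightarrow> 'v \<Rightarrow> 'v" where "E = (\<lambda>i. if i = 0 then id else (\<lambda>x. 0))"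
  have g1: "Vector_Spaces.linear sg sg (D i)" for i
    by (cases "i = 0") (simp_all add: D_def lin_idf vsg lin_zero)
  have g2: "Vector_Spaces.linear sv sv (E i)" for i
    by (cases "i = 0") (simp_all add: E_def lin_idf vsv lin_zero)
  have g3: "D 0 = id" "E 0 = id" by (simp_all add: D_def E_def)
  have g4: "cv br (\<lambda>i. D i a) (\<lambda>i. D i b) n = D n (br a b)" for n a b
    unfolding cv_def by (subst sum_single[of 0]) (auto simp: D_def algs)
  have g5: "E n (rL z u) = cv rL (\<lambda>i. D i z) (\<lambda>i. E i u) n" for n z u
    unfolding cv_def by (subst sum_single[of 0]) (auto simp: D_def E_def algs)
  have g6: "E n (rR z u) = cv rR (\<lambda>i. D i z) (\<lambda>i. E i u) n" for n z u
    unfolding cv_def by (subst sum_single[of 0]) (auto simp: D_def E_def algs)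
  have g7: "cv (\<lambda>f x. f x) Ts (\<lambda>i. E i u) n = cv (\<lambda>f x. f x) D (\<lambda>i. Ts i u) n" for n u
  proof -
    have "cv (\<lambda>f x. f x) Ts (\<lambda>i. E i u) n = Ts n u"
      unfolding cv_def by (subst sum_single[of n]) (auto simp: E_def Ts_0)
    moreover have "cv (\<lambda>f x. f x) D (\<lambda>i. Ts i u) n = Ts n u"
      unfolding cv_def by (subst sum_single[of 0]) (auto simp: D_def)
    ultimately show ?thesis by simp
  qed
  have g: "goodops Ts Ts D E"
    unfolding goodops_def using g1 g2 g3 g4 g5 g6 g7 by blast
  show ?case unfolding invs_def using g linTs T0 de by (simp add: D_def E_def)
next
  case (Suc m)
  obtain S P Q where st: "stg Ts m = (S, P, Q)" by (cases "stg Ts m") auto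
  have linTs: "Vector_Spaces.linear sv sg (Ts i)" for i using fd by (simp add: formal_deformation_def)
  have lin: "Vector_Spaces.linear sv sg (S i)" for i using Suc st by (simp add: invs_def)
  have S0: "S 0 = T" and de: "defeq S" and g: "goodops Ts S P Q" using Suc st by (simp_all add: invs_def)
  have zS: "S j u = 0" if "0 < j" "j < Suc m" for j u using Suc st that by (simp add: invs_def)
  have k: "0 < Suc m" by simp
  define y where "y = ych (Suc m) S"
  have "(\<lambda>u. - S (Suc m) u) \<in> dT0 br rL T ` Nij br rL rR T"
    using negZ1[OF k lin S0 de zS] hyp by simp
  then have "\<exists>y. y \<in> Nij br rL rR T \<and> dT0 br rL T y = (\<lambda>u. - S (Suc m) u)" by auto
  then have yp: "y \<in> Nij br rL rR T \<and> dT0 br rL T y = (\<lambda>u. - S (Suc m) u)"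
    unfolding y_def ych_def by (rule someI_ex)
  have y: "y \<in> Nij br rL rR T" using yp by simp
  have dy: "T (rL y u) - br y (T u) = - S (Suc m) u" for u
    using fun_cong[OF conjunct2[OF yp], of u] by (simp add: dT0_def)
  note L = lin'[OF k lin S0 de zS y dy] upd0[OF k lin S0 de zS y dy] updz[OF k lin S0 de zS y dy]
    de'[OF k lin S0 de zS y dy] goodops_step[OF k lin S0 de zS y dy g linTs]
  have de2: "defeq (upd br rL (Suc m) y S)" unfolding defeq_def using L(4) by blast
  have u0: "upd br rL (Suc m) y S 0 = T" by (rule ext) (rule L(2))
  show ?case unfolding invs_def using st L de2 u0 by (simp add: y_def[symmetric])
qed


lemma stab:
  assumes "n \<le> m"
  shows "fst (snd (stg Ts m)) n = fst (snd (stg Ts n)) n \<and> snd (snd (stg Ts m)) n = snd (snd (stg Ts n)) n"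
  using assms
proof (induction m)
  case 0
  then show ?case by simp
next
  case (Suc m)
  show ?case
  proof (cases "n = Suc m")
    case True
    then show ?thesis by simp
  next
    case False
    then have nm: "n \<le> m" using Suc.prems by simp
    obtain S P Q where st: "stg Ts m = (S, P, Q)" by (cases "stg Ts m") auto
    have "fst (snd (stg Ts (Suc m))) n = P n" "snd (snd (stg Ts (Suc m))) n = Q n"
      using st nm by (auto simp: phup_def psup_def sh_def)
    then show ?thesis using Suc.IH[OF nm] st by simp
  qed
qed

lemma main:
  assumes hyp: "Z1 sg br sv rL rR T = dT0 br rL T ` Nij br rL rR T"
    and fd: "formal_deformation sg br sv rL rR T Ts"
  shows "trivial_deformation sg br sv rL rR T Ts"
proof -
  define ph where "ph = (\<lambda>n. fst (snd (stg Ts n)) n)"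
  define vph where "vph = (\<lambda>n. snd (snd (stg Ts n)) n)"
  define x where "x = ych 1 Ts"
  have stage: "\<exists>S P Q. stg Ts n = (S, P, Q) \<and> (\<forall>i. Vector_Spaces.linear sv sg (S i)) \<and> S 0 = T
     \<and> (\<forall>j u. 0 < j \<and> j \<le> n \<longrightarrow> S j u = 0) \<and> goodops Ts S P Q
     \<and> (\<forall>i\<le>n. P i = ph i \<and> Q i = vph i)" for n
  proof -
    obtain S P Q where st: "stg Ts n = (S, P, Q)" by (cases "stg Ts n") auto
    have iv: "invs Ts n" by (rule inv_all[OF hyp fd])
    have "\<forall>i\<le>n. P i = ph i \<and> Q i = vph i"
      using stab[of _ n Ts] st by (auto simp: ph_def vph_def)
    then show ?thesis using iv st by (auto simp: invs_def)
  qed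
  have c1: "Vector_Spaces.linear sg sg (ph i)" "Vector_Spaces.linear sv sv (vph i)" for i
  proof -
    obtain S P Q where g: "goodops Ts S P Q" and e: "\<forall>j\<le>i. P j = ph j \<and> Q j = vph j"
      using stage[of i] by blast
    have "P i = ph i" "Q i = vph i" using e by simp_all
    moreover have "Vector_Spaces.linear sg sg (P i)" "Vector_Spaces.linear sv sv (Q i)"
      using g by (simp_all add: goodops_def)
    ultimately show "Vector_Spaces.linear sg sg (ph i)" "Vector_Spaces.linear sv sv (vph i)" by simp_all
  qed
  have c2: "ph 0 = id" "vph 0 = id" by (simp_all add: ph_def vph_def)
  have c3: "ph 1 = br x" "vph 1 = rL x"
    by (auto simp: ph_def vph_def x_def phup_def psup_def sh_def)
  have c4: "(\<Sum>i\<le>n. br (ph i a) (ph (n - i) b)) = ph n (br a b)" for n a b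
  proof -
    obtain S P Q where "stg Ts n = (S, P, Q)" and g: "goodops Ts S P Q" and e: "\<forall>i\<le>n. P i = ph i \<and> Q i = vph i"
      using stage[of n] by blast
    have "cv br (\<lambda>i. P i a) (\<lambda>i. P i b) n = P n (br a b)" using g by (simp add: goodops_def)
    then show ?thesis using e unfolding cv_def by simp
  qed
  have c5: "vph n (rL a u) = (\<Sum>i\<le>n. rL (ph i a) (vph (n - i) u))"
    "vph n (rR a u) = (\<Sum>i\<le>n. rR (ph i a) (vph (n - i) u))" for n a u
  proof -
    obtain S P Q where "stg Ts n = (S, P, Q)" and g: "goodops Ts S P Q" and e: "\<forall>i\<le>n. P i = ph i \<and> Q i = vph i"
      using stage[of n] by blast
    have "Q n (rL a u) = cv rL (\<lambda>i. P i a) (\<lambda>i. Q i u) n" "Q n (rR a u) = cv rR (\<lambda>i. P i a) (\<lambda>i. Q i u) n"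
      using g by (simp_all add: goodops_def)
    then show "vph n (rL a u) = (\<Sum>i\<le>n. rL (ph i a) (vph (n - i) u))"
      "vph n (rR a u) = (\<Sum>i\<le>n. rR (ph i a) (vph (n - i) u))" using e unfolding cv_def by simp_all
  qed
  have c6: "(\<Sum>i\<le>n. Ts i (vph (n - i) u)) = ph n (T u)" for n u
  proof -
    obtain S P Q where "stg Ts n = (S, P, Q)" and g: "goodops Ts S P Q" and e: "\<forall>i\<le>n. P i = ph i \<and> Q i = vph i"
      and S0: "S 0 = T" and zS: "\<forall>j u. 0 < j \<and> j \<le> n \<longrightarrow> S j u = 0"
      using stage[of n] by blast
    have linP: "Vector_Spaces.linear sg sg (P i)" for i using g by (simp add: goodops_def)
    have P_0: "P i 0 = 0" for i using addf(1)[of "P i", OF lin_addD[OF linP]] .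
    have "cv (\<lambda>f x. f x) Ts (\<lambda>i. Q i u) n = cv (\<lambda>f x. f x) P (\<lambda>i. S i u) n"
      using g by (simp add: goodops_def)
    also have "\<dots> = P n (S 0 u)"
      unfolding cv_def by (subst sum_single[of n]) (auto simp: zS P_0)
    finally show ?thesis using e S0 unfolding cv_def by simp
  qed
  show ?thesis unfolding trivial_deformation_def
    using c1 c2 c3 c4 c5 c6 by blast
qed

end

theorem proposition3p20:
  fixes sg :: "'k::field \<Rightarrow> 'g::ab_group_add \<Rightarrow> 'g"
    and br :: "'g \<Rightarrow> 'g \<Rightarrow> 'g"
    and sv :: "'k \<Rightarrow> 'v::ab_group_add \<Rightarrow> 'v"
    and rL rR :: "'g \<Rightarrow> 'v \<Rightarrow> 'v"
    and T :: "'v \<Rightarrow> 'g"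
  assumes "leibniz_algebra sg br"
    and "leibniz_rep sg br sv rL rR"
    and "rel_RB sg br sv rL rR T"
    and "Z1 sg br sv rL rR T = dT0 br rL T ` Nij br rL rR T"
  shows "rigid sg br sv rL rR T"
proof -
  interpret LS sg br sv rL rR T using assms(1-3) by unfold_locales
  show ?thesis unfolding rigid_def using main[OF assms(4)] by blast
qed

end
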